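(* The three-element chain $3=\{0<1<2\}$ forms a strong generator of $\mathbf{CPO}$: it is a generator, and for every cpo $B$ and every proper subobject $f\colon A\to B$ (a monomorphism that is not an isomorphism) there is a cpo map $3\to B$ that does not factor through $f$.
   Context: A cpo is a poset in which every chain, including the empty chain, has a join. A cpo map is a map preserving joins of all chains. $\mathbf{CPO}$ is the category of cpo's and cpo maps. A set $\mathcal G$ of objects is a generator if for any two distinct morphisms $f,g\colon A\to B$ there are $G\in\mathcal G$ and $h\colon G\to A$ with $fh\ne gh$. Monomorphisms in $\mathbf{CPO}$ are exactly the injective cpo maps, and isomorphisms are exactly the bijective cpo maps that reflect the order. *)

theory Defs
  imports Main
begin

definition partial_order_on :: "'a set \<Rightarrow> ('a \<Rightarrow> 'a \<Rightarrow> bool) \<Rightarrow> bool" where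
  "partial_order_on S le \<longleftrightarrow>
     (\<forall>x\<in>S. le x x) \<and>
     (\<forall>x\<in>S. \<forall>y\<in>S. le x y \<and> le y x \<longrightarrow> x = y) \<and>
     (\<forall>x\<in>S. \<forall>y\<in>S. \<forall>z\<in>S. le x y \<and> le y z \<longrightarrow> le x z)"

definition is_chain :: "'a set \<Rightarrow> ('a \<Rightarrow> 'a \<Rightarrow> bool) \<Rightarrow> 'a set \<Rightarrow> bool" where
  "is_chain S le C \<longleftrightarrow> C \<subseteq> S \<and> (\<forall>x\<in>C. \<forall>y\<in>C. le x y \<or> le y x)"

definition is_join :: "'a set \<Rightarrow> ('a \<Rightarrow> 'a \<Rightarrow> bool) \<Rightarrow> 'a set \<Rightarrow> 'a \<Rightarrow> bool" where
  "is_join S le C j \<longleftrightarrow> j \<in> S \<and> (\<forall>x\<in>C. le x j) \<and>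
     (\<forall>u\<in>S. (\<forall>x\<in>C. le x u) \<longrightarrow> le j u)"

text \<open>A cpo: a poset in which every chain, including the empty chain, has a join.\<close>
definition cpo :: "'a set \<Rightarrow> ('a \<Rightarrow> 'a \<Rightarrow> bool) \<Rightarrow> bool" where
  "cpo S le \<longleftrightarrow> partial_order_on S le \<and>
     (\<forall>C. is_chain S le C \<longrightarrow> (\<exists>j. is_join S le C j))"

definition cpo_map :: "'a set \<Rightarrow> ('a \<Rightarrow> 'a \<Rightarrow> bool) \<Rightarrow> 'b set \<Rightarrow> ('b \<Rightarrow> 'b \<Rightarrow> bool)
    \<Rightarrow> ('a \<Rightarrow> 'b) \<Rightarrow> bool" where
  "cpo_map S le T le' f \<longleftrightarrow> (\<forall>x\<in>S. f x \<in> T) \<and>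
     (\<forall>C j. is_chain S le C \<and> is_join S le C j \<longrightarrow> is_join T le' (f ` C) (f j))"

text \<open>Monomorphisms of CPO are exactly the injective cpo maps.\<close>
definition cpo_mono :: "'a set \<Rightarrow> ('a \<Rightarrow> 'a \<Rightarrow> bool) \<Rightarrow> 'b set \<Rightarrow> ('b \<Rightarrow> 'b \<Rightarrow> bool)
    \<Rightarrow> ('a \<Rightarrow> 'b) \<Rightarrow> bool" where
  "cpo_mono S le T le' f \<longleftrightarrow> cpo_map S le T le' f \<and> inj_on f S"

definition cpo_iso :: "'a set \<Rightarrow> ('a \<Rightarrow> 'a \<Rightarrow> bool) \<Rightarrow> 'b set \<Rightarrow> ('b \<Rightarrow> 'b \<Rightarrow> bool)
    \<Rightarrow> ('a \<Rightarrow> 'b) \<Rightarrow> bool" where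
  "cpo_iso S le T le' f \<longleftrightarrow> cpo_map S le T le' f \<and>
     (\<exists>g. cpo_map T le' S le g \<and> (\<forall>x\<in>S. g (f x) = x) \<and> (\<forall>y\<in>T. f (g y) = y))"

definition three :: "nat set" where "three = {0, 1, 2}"
definition le3 :: "nat \<Rightarrow> nat \<Rightarrow> bool" where "le3 x y \<longleftrightarrow> x \<le> y"

end

theory Submission
  imports Defs
begin

lemma po_refl: "partial_order_on S le \<Longrightarrow> x \<in> S \<Longrightarrow> le x x"
  by (simp add: Defs.partial_order_on_def)

lemma cpo_map_mono:
  assumes "partial_order_on S le" "cpo_map S le T le' f" "x \<in> S" "y \<in> S" "le x y"
  shows "le' (f x) (f y)"
proof -
  have c: "is_chain S le {x,y}" using assms po_refl[OF assms(1) assms(3)] po_refl[OF assms(1) assms(4)] unfolding is_chain_def by auto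
  have j: "is_join S le {x,y} y" using assms po_refl[OF assms(1) assms(4)] unfolding is_join_def by auto
  have "is_join T le' (f ` {x,y}) (f y)" using assms(2) c j unfolding cpo_map_def by blast
  thus ?thesis unfolding is_join_def by auto
qed

lemma cpo_bot: "cpo S le \<Longrightarrow> \<exists>b. is_join S le {} b"
  unfolding cpo_def is_chain_def by auto

lemma three_map:
  assumes po: "partial_order_on S le" and b: "is_join S le {} p" and q: "q \<in> S" and r: "r \<in> S"
    and pq: "le p q" and qr: "le q r"
  shows "cpo_map three le3 S le (\<lambda>t. if t = 0 then p else if t = 1 then q else r)"
proof -
  let ?h = "\<lambda>t::nat. if t = 0 then p else if t = 1 then q else r"
  have pS: "p \<in> S" using b unfolding is_join_def by auto
  have pr: "le p r" using po pS q r pq qr unfolding Defs.partial_order_on_def by blast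
  have mono: "\<And>x y. x \<in> three \<Longrightarrow> y \<in> three \<Longrightarrow> x \<le> y \<Longrightarrow> le (?h x) (?h y)"
    using pq qr pr po_refl[OF po] pS q r unfolding three_def le3_def by auto
  have inS: "\<forall>x\<in>three. ?h x \<in> S" using pS q r by auto
  moreover have "is_join S le (?h ` C) (?h j)" if ch: "is_chain three le3 C" and jj: "is_join three le3 C j" for C j
  proof (cases "C = {}")
    case True
    have "le3 j 0" using jj True unfolding is_join_def three_def le3_def by auto
    hence "j = 0" unfolding le3_def by auto
    thus ?thesis using True b by simp
  next
    case False
    have fin: "finite C" using ch unfolding is_chain_def three_def by (auto intro: finite_subset)
    have M: "Max C \<in> C" using fin False by simp
    have Mt: "Max C \<in> three" using M ch unfolding is_chain_def by auto
    have "le3 j (Max C)" using jj Mt fin unfolding is_join_def le3_def by auto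
    moreover have "le3 (Max C) j" using jj M unfolding is_join_def by auto
    ultimately have jM: "j = Max C" unfolding le3_def by auto
    have jt: "j \<in> three" using jj unfolding is_join_def by auto
    show ?thesis unfolding is_join_def
    proof (intro conjI ballI impI)
      show "?h j \<in> S" using inS jt by blast
      fix y assume "y \<in> ?h ` C"
      then obtain x where x: "x \<in> C" "y = ?h x" by auto
      have "x \<in> three" using x ch unfolding is_chain_def by auto
      moreover have "x \<le> j" using jM fin x by auto
      ultimately show "le y (?h j)" using mono jt x by blast
    next
      fix u assume "u \<in> S" "\<forall>x\<in>?h ` C. le x u"
      thus "le (?h j) u" using M jM by auto
    qed
  qed
  ultimately show ?thesis unfolding cpo_map_def by blast
qed

lemma not_iso_cases:
  assumes po: "partial_order_on SA leA" "partial_order_on SB leB"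
    and m: "cpo_mono SA leA SB leB f" and ni: "\<not> cpo_iso SA leA SB leB f"
  shows "(\<exists>y\<in>SB. y \<notin> f ` SA) \<or> (\<exists>a\<in>SA. \<exists>b\<in>SA. leB (f a) (f b) \<and> \<not> leA a b)"
proof (rule ccontr)
  assume "\<not> ?thesis"
  hence surj: "SB \<subseteq> f ` SA" and refl: "\<And>a b. a \<in> SA \<Longrightarrow> b \<in> SA \<Longrightarrow> leB (f a) (f b) \<Longrightarrow> leA a b"
    by auto
  have fm: "cpo_map SA leA SB leB f" and inj: "inj_on f SA" using m unfolding cpo_mono_def by auto
  define g where "g = inv_into SA f"
  have gS: "\<And>y. y \<in> SB \<Longrightarrow> g y \<in> SA" using surj unfolding g_def by (auto intro: inv_into_into)
  have fg: "\<And>y. y \<in> SB \<Longrightarrow> f (g y) = y" using surj unfolding g_def by (auto intro: f_inv_into_f)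
  have gf: "\<And>x. x \<in> SA \<Longrightarrow> g (f x) = x" using inj unfolding g_def by auto
  have fS: "\<And>x. x \<in> SA \<Longrightarrow> f x \<in> SB" using fm unfolding cpo_map_def by auto
  have "cpo_map SB leB SA leA g"
    unfolding cpo_map_def
  proof (intro conjI allI impI ballI)
    show "\<And>x. x \<in> SB \<Longrightarrow> g x \<in> SA" by (rule gS)
    fix C j assume a: "is_chain SB leB C \<and> is_join SB leB C j"
    hence CS: "C \<subseteq> SB" and jS: "j \<in> SB" and ub: "\<forall>x\<in>C. leB x j"
      and lst: "\<forall>u\<in>SB. (\<forall>x\<in>C. leB x u) \<longrightarrow> leB j u"
      unfolding is_chain_def is_join_def by auto
    show "is_join SA leA (g ` C) (g j)" unfolding is_join_def
    proof (intro conjI ballI impI)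
      show "g j \<in> SA" using gS jS .
      fix y assume "y \<in> g ` C"
      then obtain x where x: "x \<in> C" "y = g x" by auto
      show "leA y (g j)" using refl[of "g x" "g j"] x CS gS jS fg ub by auto
    next
      fix u assume u: "u \<in> SA" "\<forall>x\<in>g ` C. leA x u"
      have "\<forall>x\<in>C. leB x (f u)"
      proof
        fix x assume x: "x \<in> C"
        have "leB (f (g x)) (f u)" using cpo_map_mono[OF po(1) fm, of "g x" u] u x CS gS by auto
        thus "leB x (f u)" using fg x CS by auto
      qed
      hence "leB j (f u)" using lst fS u by auto
      thus "leA (g j) u" using refl[of "g j" u] fg jS gS u by auto
    qed
  qed
  hence "cpo_iso SA leA SB leB f" unfolding cpo_iso_def using fm gf fg by blast
  thus False using ni by simp
qed

theorem mainTheorem5: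
  shows "(\<forall>(SA :: 'a set) leA (SB :: 'b set) leB f g.
            cpo SA leA \<and> cpo SB leB \<and>
            cpo_map SA leA SB leB f \<and> cpo_map SA leA SB leB g \<and>
            (\<exists>x\<in>SA. f x \<noteq> g x) \<longrightarrow>
            (\<exists>h. cpo_map three le3 SA leA h \<and> (\<exists>t\<in>three. f (h t) \<noteq> g (h t))))
       \<and> (\<forall>(SA :: 'c set) leA (SB :: 'd set) leB f.
            cpo SA leA \<and> cpo SB leB \<and>
            cpo_mono SA leA SB leB f \<and> \<not> cpo_iso SA leA SB leB f \<longrightarrow>
            (\<exists>h. cpo_map three le3 SB leB h \<and>
                 \<not> (\<exists>k. cpo_map three le3 SA leA k \<and> (\<forall>t\<in>three. f (k t) = h t))))"
proof (intro conjI allI impI)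
  fix SA :: "'a set" and leA and SB :: "'b set" and leB f g
  assume a: "cpo SA leA \<and> cpo SB leB \<and> cpo_map SA leA SB leB f \<and> cpo_map SA leA SB leB g \<and>
            (\<exists>x\<in>SA. f x \<noteq> g x)"
  then obtain x where x: "x \<in> SA" "f x \<noteq> g x" by auto
  have po: "partial_order_on SA leA" using a unfolding cpo_def by auto
  obtain p where p: "is_join SA leA {} p" using cpo_bot a by blast
  have px: "leA p x" using p x unfolding is_join_def by auto
  have h: "cpo_map three le3 SA leA (\<lambda>t. if t = 0 then p else if t = 1 then x else x)"
    by (rule three_map[OF po p x(1) x(1) px po_refl[OF po x(1)]])
  show "\<exists>h. cpo_map three le3 SA leA h \<and> (\<exists>t\<in>three. f (h t) \<noteq> g (h t))"
    using h x(2) unfolding three_def by (intro exI[of _ "(\<lambda>t. if t = 0 then p else if t = 1 then x else x)"]) auto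
next
  fix SA :: "'c set" and leA and SB :: "'d set" and leB f
  assume a: "cpo SA leA \<and> cpo SB leB \<and> cpo_mono SA leA SB leB f \<and> \<not> cpo_iso SA leA SB leB f"
  have poA: "partial_order_on SA leA" and poB: "partial_order_on SB leB"
    using a unfolding cpo_def by auto
  have fm: "cpo_map SA leA SB leB f" and inj: "inj_on f SA" using a unfolding cpo_mono_def by auto
  have fS: "\<And>x. x \<in> SA \<Longrightarrow> f x \<in> SB" using fm unfolding cpo_map_def by auto
  obtain p where p: "is_join SB leB {} p" using cpo_bot a by blast
  have pS: "p \<in> SB" and pl: "\<And>y. y \<in> SB \<Longrightarrow> leB p y" using p unfolding is_join_def by auto
  from not_iso_cases[OF poA poB] a
  consider (ns) y where "y \<in> SB" "y \<notin> f ` SA"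
    | (nr) a b where "a \<in> SA" "b \<in> SA" "leB (f a) (f b)" "\<not> leA a b" by blast
  thus "\<exists>h. cpo_map three le3 SB leB h \<and>
                 \<not> (\<exists>k. cpo_map three le3 SA leA k \<and> (\<forall>t\<in>three. f (k t) = h t))"
  proof cases
    case ns
    let ?h = "\<lambda>t::nat. if t = 0 then p else if t = 1 then y else y"
    have h: "cpo_map three le3 SB leB ?h"
      by (rule three_map[OF poB p ns(1) ns(1) pl[OF ns(1)] po_refl[OF poB ns(1)]])
    have "\<not> (\<exists>k. cpo_map three le3 SA leA k \<and> (\<forall>t\<in>three. f (k t) = ?h t))"
    proof
      assume "\<exists>k. cpo_map three le3 SA leA k \<and> (\<forall>t\<in>three. f (k t) = ?h t)"
      then obtain k where k: "cpo_map three le3 SA leA k" "\<forall>t\<in>three. f (k t) = ?h t" by blast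
      have "k 1 \<in> SA" using k(1) unfolding cpo_map_def three_def by auto
      moreover have "f (k 1) = y" using k(2) unfolding three_def le3_def by auto
      ultimately show False using ns by blast
    qed
    thus ?thesis using h by blast
  next
    case nr
    let ?h = "\<lambda>t::nat. if t = 0 then p else if t = 1 then f a else f b"
    have h: "cpo_map three le3 SB leB ?h"
      by (rule three_map[OF poB p fS[OF nr(1)] fS[OF nr(2)] pl[OF fS[OF nr(1)]] nr(3)])
    have "\<not> (\<exists>k. cpo_map three le3 SA leA k \<and> (\<forall>t\<in>three. f (k t) = ?h t))"
    proof
      assume "\<exists>k. cpo_map three le3 SA leA k \<and> (\<forall>t\<in>three. f (k t) = ?h t)"
      then obtain k where k: "cpo_map three le3 SA leA k" "\<forall>t\<in>three. f (k t) = ?h t" by blast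
      have k1: "k 1 \<in> SA" and k2: "k 2 \<in> SA" using k(1) unfolding cpo_map_def three_def by auto
      have "f (k 1) = f a" "f (k 2) = f b" using k(2) unfolding three_def le3_def by auto
      hence e: "k 1 = a" "k 2 = b" using inj k1 k2 nr(1,2) by (auto dest: inj_onD)
      have po3: "partial_order_on three le3" unfolding Defs.partial_order_on_def le3_def by auto
      have "leA (k 1) (k 2)"
        by (rule cpo_map_mono[OF po3 k(1)]) (auto simp: three_def le3_def)
      thus False using e nr(4) by simp
    qed
    thus ?thesis using h by blast
  qed
qed

end
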